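(* In the setting described in the context, $\frac{qK^{-1}A-q^{-1}AK^{-1}}{q-q^{-1}}=aI$, $\frac{qBK^{-1}-q^{-1}K^{-1}B}{q-q^{-1}}=bI$, $\frac{qKA^*-q^{-1}A^*K}{q-q^{-1}}=a^*I$, $\frac{qB^*K-q^{-1}KB^*}{q-q^{-1}}=b^*I$.
   Context: $\mathbb K$ is an algebraically closed field, $q\in\mathbb K$ nonzero and not a root of unity, $V$ a nonzero finite-dimensional $\mathbb K$-vector space. A tridiagonal pair on $V$ is an ordered pair $A,A^*$ of linear maps $V\to V$ such that: (i) each of $A,A^*$ is diagonalizable; (ii) there is an ordering $V_0,\dots,V_d$ of the eigenspaces of $A$ with $A^*V_i\subseteq V_{i-1}+V_i+V_{i+1}$ ($V_{-1}=V_{d+1}=0$); (iii) there is an ordering $V^*_0,\dots,V^*_\delta$ of the eigenspaces of $A^*$ with $AV^*_i\subseteq V^*_{i-1}+V^*_i+V^*_{i+1}$ ($V^*_{-1}=V^*_{\delta+1}=0$); (iv) no subspace $W\ne0,V$ satisfies $AW\subseteq W$, $A^*W\subseteq W$. It is known $d=\delta$; orderings as in (ii),(iii) are called standard. Setting: $A,A^*$ is a tridiagonal pair on $V$; $V_0,\dots,V_d$ (resp. $V^*_0,\dots,V^*_d$) is a standard ordering of the eigenspaces of $A$ (resp. $A^*$); the eigenvalue of $A$ on $V_i$ is $aq^{2i-d}$ and that of $A^*$ on $V^*_i$ is $a^*q^{d-2i}$ for some nonzero $a,a^*\in\mathbb K$; $b,b^*\in\mathbb K$ are nonzero. For $0\le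 i\le d$, each of the following three families of subspaces forms a decomposition of $V$ (nonzero subspaces, direct sum equal to $V$): $(V^*_0+\cdots+V^*_i)\cap(V_0+\cdots+V_{d-i})$; $(V^*_{d-i}+\cdots+V^*_d)\cap(V_i+\cdots+V_d)$; $(V^*_0+\cdots+V^*_i)\cap(V_i+\cdots+V_d)$. $B$ is the linear map acting as $bq^{2i-d}I$ on $(V^*_0+\cdots+V^*_i)\cap(V_0+\cdots+V_{d-i})$; $B^*$ acts as $b^*q^{d-2i}I$ on $(V^*_{d-i}+\cdots+V^*_d)\cap(V_i+\cdots+V_d)$; $K$ acts as $q^{2i-d}I$ on $(V^*_0+\cdots+V^*_i)\cap(V_i+\cdots+V_d)$ (for each $0\le i\le d$). *)

theory Defs
  imports "HOL-Computational_Algebra.Polynomial" "HOL-Library.Set_Algebras"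
begin

text \<open>Sums of subspaces are Minkowski sums
  (HOL-Library.Set_Algebras), with 0 = {0}.\<close>

definition eigensp :: "('k \<Rightarrow> 'v \<Rightarrow> 'v) \<Rightarrow> ('v \<Rightarrow> 'v) \<Rightarrow> 'k \<Rightarrow> 'v set" where
  "eigensp scale A \<theta> = {v. A v = scale \<theta> v}"

definition is_eigenspace :: "('k::field \<Rightarrow> 'v::ab_group_add \<Rightarrow> 'v) \<Rightarrow> ('v \<Rightarrow> 'v) \<Rightarrow> 'v set \<Rightarrow> bool" where
  "is_eigenspace scale A W \<longleftrightarrow> (\<exists>\<theta>. W = eigensp scale A \<theta> \<and> W \<noteq> {0})"

definition diagonalizable :: "('k::field \<Rightarrow> 'v::ab_group_add \<Rightarrow> 'v) \<Rightarrow> ('v \<Rightarrow> 'v) \<Rightarrow> bool" where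
  "diagonalizable scale A \<longleftrightarrow>
     module.span scale (\<Union>{W. is_eigenspace scale A W}) = UNIV"

definition ext_sp :: "(nat \<Rightarrow> 'v::zero set) \<Rightarrow> nat \<Rightarrow> int \<Rightarrow> 'v set" where
  "ext_sp Vs d j = (if 0 \<le> j \<and> j \<le> int d then Vs (nat j) else {0})"

definition standard_ordering ::
  "('k::field \<Rightarrow> 'v::ab_group_add \<Rightarrow> 'v) \<Rightarrow> ('v \<Rightarrow> 'v) \<Rightarrow> ('v \<Rightarrow> 'v) \<Rightarrow> (nat \<Rightarrow> 'v set) \<Rightarrow> nat \<Rightarrow> bool" where
  "standard_ordering scale A As Vs d \<longleftrightarrow>
     inj_on Vs {..d} \<and> Vs ` {..d} = {W. is_eigenspace scale A W} \<and>
     (\<forall>i\<le>d. As ` Vs i \<subseteq>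
        ext_sp Vs d (int i - 1) + ext_sp Vs d (int i) + ext_sp Vs d (int i + 1))"

definition tridiagonal_pair :: "('k::field \<Rightarrow> 'v::ab_group_add \<Rightarrow> 'v) \<Rightarrow> ('v \<Rightarrow> 'v) \<Rightarrow> ('v \<Rightarrow> 'v) \<Rightarrow> bool" where
  "tridiagonal_pair scale A As \<longleftrightarrow>
     Vector_Spaces.linear scale scale A \<and> Vector_Spaces.linear scale scale As \<and>
     diagonalizable scale A \<and> diagonalizable scale As \<and>
     (\<exists>Vs d. standard_ordering scale A As Vs d) \<and>
     (\<exists>Vss \<delta>. standard_ordering scale As A Vss \<delta>) \<and>
     (\<forall>W. module.subspace scale W \<and> A ` W \<subseteq> W \<and> As ` W \<subseteq> W \<longrightarrow> W = {0} \<or> W = UNIV)"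

definition is_decomposition :: "('k::field \<Rightarrow> 'v::ab_group_add \<Rightarrow> 'v) \<Rightarrow> (nat \<Rightarrow> 'v set) \<Rightarrow> nat \<Rightarrow> bool" where
  "is_decomposition scale Us d \<longleftrightarrow>
     (\<forall>i\<le>d. module.subspace scale (Us i) \<and> Us i \<noteq> {0}) \<and>
     (\<Sum>i\<le>d. Us i) = UNIV \<and>
     (\<forall>g. (\<forall>i\<le>d. g i \<in> Us i) \<and> (\<Sum>i\<le>d. g i) = 0 \<longrightarrow> (\<forall>i\<le>d. g i = 0))"

end

theory Submission
  imports Defs
begin


lemma lin_add: "Vector_Spaces.linear s s T \<Longrightarrow> T (x + y) = T x + T y"
  unfolding Vector_Spaces.linear_iff by blast
lemma lin_scale: "Vector_Spaces.linear s s T \<Longrightarrow> T (s c x) = s c (T x)"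
  unfolding Vector_Spaces.linear_iff by blast
lemma lin_additive: "Vector_Spaces.linear s s T \<Longrightarrow> additive T"
  by (simp add: additive_def lin_add)
lemma lin_diff: "Vector_Spaces.linear s s T \<Longrightarrow> T (x - y) = T x - T y"
  by (rule additive.diff[OF lin_additive])
lemma lin_sum: "Vector_Spaces.linear s s T \<Longrightarrow> T (sum g S) = (\<Sum>x\<in>S. T (g x))"
  by (rule additive.sum[OF lin_additive])
lemma lin_zero: "Vector_Spaces.linear s s T \<Longrightarrow> T 0 = 0"
  by (rule additive.zero[OF lin_additive])

context vector_space
begin

lemma sum_sets_mem:
  assumes "finite S"
  shows "x \<in> sum E S \<longleftrightarrow> (\<exists>g. (\<forall>h\<in>S. g h \<in> E h) \<and> x = sum g S)"
  using set_sum_alt[OF assms, of E] by auto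

lemma subspace_sum_sets:
  assumes fin: "finite S" and sub: "\<And>h. h \<in> S \<Longrightarrow> subspace (E h)"
  shows "subspace (sum E S)"
proof (rule subspaceI)
  show "0 \<in> sum E S" unfolding sum_sets_mem[OF fin]
    by (rule exI[of _ "\<lambda>_. 0"]) (auto intro: subspace_0 sub)
next
  fix x y assume "x \<in> sum E S" "y \<in> sum E S"
  then obtain g g' where g: "\<forall>h\<in>S. g h \<in> E h" "x = sum g S"
    and g': "\<forall>h\<in>S. g' h \<in> E h" "y = sum g' S" unfolding sum_sets_mem[OF fin] by blast
  show "x + y \<in> sum E S" unfolding sum_sets_mem[OF fin]
    by (rule exI[of _ "\<lambda>h. g h + g' h"]) (use g g' in \<open>auto intro: subspace_add sub simp: sum.distrib\<close>)
next
  fix c x assume "x \<in> sum E S"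
  then obtain g where g: "\<forall>h\<in>S. g h \<in> E h" "x = sum g S"
    unfolding sum_sets_mem[OF fin] by blast
  show "scale c x \<in> sum E S" unfolding sum_sets_mem[OF fin]
    by (rule exI[of _ "\<lambda>h. scale c (g h)"]) (use g in \<open>auto intro: subspace_scale sub simp: scale_sum_right\<close>)
qed

lemma sum_sets_sub:
  assumes fin: "finite S" and hS: "h \<in> S" and z: "\<And>h. h \<in> S \<Longrightarrow> 0 \<in> E h" and x: "x \<in> E h"
  shows "x \<in> sum E S"
  unfolding sum_sets_mem[OF fin]
proof (rule exI[of _ "\<lambda>h'. if h' = h then x else 0"], intro conjI)
  show "\<forall>h'\<in>S. (if h' = h then x else 0) \<in> E h'" using x z by auto
  show "x = (\<Sum>h'\<in>S. if h' = h then x else 0)" using fin hS by (simp add: sum.delta)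
qed

lemma sum_sets_mono:
  assumes fin: "finite S'" and sub: "S \<subseteq> S'" and z: "\<And>h. h \<in> S' \<Longrightarrow> 0 \<in> E h"
  shows "sum E S \<subseteq> sum E S'"
proof
  fix x assume "x \<in> sum E S"
  moreover have finS: "finite S" using fin sub finite_subset by blast
  ultimately obtain g where g: "\<forall>h\<in>S. g h \<in> E h" "x = sum g S"
    unfolding sum_sets_mem[OF finS] by blast
  show "x \<in> sum E S'" unfolding sum_sets_mem[OF fin]
  proof (rule exI[of _ "\<lambda>h. if h \<in> S then g h else 0"], intro conjI)
    show "\<forall>h\<in>S'. (if h \<in> S then g h else 0) \<in> E h" using g z by auto
    have "sum g S = sum (\<lambda>h. if h \<in> S then g h else 0) S" by simp
    also have "\<dots> = sum (\<lambda>h. if h \<in> S then g h else 0) S'"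
      by (rule sum.mono_neutral_left[OF fin sub]) auto
    finally show "x = (\<Sum>h\<in>S'. if h \<in> S then g h else 0)" using g by simp
  qed
qed

lemma sum_sets_map:
  assumes fin: "finite S" and P: "subspace P" and T: "Vector_Spaces.linear scale scale T"
    and step: "\<And>h x. h \<in> S \<Longrightarrow> x \<in> E h \<Longrightarrow> T x - scale \<mu> x \<in> P"
    and x: "x \<in> sum E S"
  shows "T x - scale \<mu> x \<in> P"
proof -
  obtain g where g: "\<forall>h\<in>S. g h \<in> E h" "x = sum g S"
    using x unfolding sum_sets_mem[OF fin] by blast
  have "T x - scale \<mu> x = (\<Sum>h\<in>S. T (g h) - scale \<mu> (g h))"
    using g by (simp add: lin_sum[OF T] scale_sum_right sum_subtractf)
  also have "\<dots> \<in> P" by (rule subspace_sum[OF P]) (use g step in auto)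
  finally show ?thesis .
qed

lemma eigensp_subspace:
  assumes T: "Vector_Spaces.linear scale scale T"
  shows "subspace (eigensp scale T l)"
  by (rule subspaceI) (auto simp: eigensp_def lin_add[OF T] lin_scale[OF T] lin_zero[OF T]
      scale_right_distrib scale_left_commute)

lemma eig_direct:
  assumes T: "Vector_Spaces.linear scale scale T" and fin: "finite S"
  shows "inj_on l S \<Longrightarrow> (\<forall>h\<in>S. g h \<in> eigensp scale T (l h)) \<Longrightarrow> sum g S = 0 \<Longrightarrow> \<forall>h\<in>S. g h = 0"
  using fin
proof (induction S arbitrary: g rule: finite_induct)
  case empty
  then show ?case by simp
next
  case (insert k S)
  have inj: "inj_on l S" and lk: "\<forall>h\<in>S. l h \<noteq> l k"
    using insert.prems(1) insert.hyps(2) by (auto simp: inj_on_def)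
  have s0: "g k + sum g S = 0" using insert.prems insert.hyps by simp
  have "T (g k + sum g S) - scale (l k) (g k + sum g S) = 0" using s0 by (simp add: lin_zero[OF T])
  moreover have "T (g k + sum g S) - scale (l k) (g k + sum g S)
      = (\<Sum>h\<in>S. scale (l h - l k) (g h))"
    using insert.prems(2)
    by (simp add: lin_add[OF T] lin_sum[OF T] eigensp_def scale_right_distrib scale_sum_right
        scale_left_diff_distrib sum_subtractf)
  ultimately have "(\<Sum>h\<in>S. scale (l h - l k) (g h)) = 0" by simp
  moreover have "\<forall>h\<in>S. scale (l h - l k) (g h) \<in> eigensp scale T (l h)"
    using insert.prems(2) subspace_scale[OF eigensp_subspace[OF T]] by blast
  ultimately have "\<forall>h\<in>S. scale (l h - l k) (g h) = 0"
    using insert.IH[OF inj, of "\<lambda>h. scale (l h - l k) (g h)"] by blast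
  hence gS: "\<forall>h\<in>S. g h = 0" using lk by auto
  hence "sum g S = 0" by simp
  hence "g k = 0" using s0 by simp
  thus ?case using gS by simp
qed

lemma eig_shift:
  assumes T: "Vector_Spaces.linear scale scale T" and fin: "finite S"
    and x: "x \<in> sum (\<lambda>h. eigensp scale T (l h)) S"
  shows "T x - scale \<mu> x \<in> sum (\<lambda>h. eigensp scale T (l h)) {h\<in>S. l h \<noteq> \<mu>}"
proof (rule sum_sets_map[OF fin _ T _ x])
  show "subspace (sum (\<lambda>h. eigensp scale T (l h)) {h \<in> S. l h \<noteq> \<mu>})"
    using fin by (intro subspace_sum_sets eigensp_subspace[OF T]) auto
  fix h y assume h: "h \<in> S" and y: "y \<in> eigensp scale T (l h)"
  have e: "T y - scale \<mu> y = scale (l h - \<mu>) y" using y by (simp add: eigensp_def scale_left_diff_distrib)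
  show "T y - scale \<mu> y \<in> sum (\<lambda>h. eigensp scale T (l h)) {h \<in> S. l h \<noteq> \<mu>}"
  proof (cases "l h = \<mu>")
    case True
    have "subspace (sum (\<lambda>h. eigensp scale T (l h)) {h \<in> S. l h \<noteq> \<mu>})"
      using fin by (intro subspace_sum_sets eigensp_subspace[OF T]) auto
    then show ?thesis using e True subspace_0 by simp
  next
    case False
    then show ?thesis unfolding e using fin h y
      by (intro sum_sets_sub subspace_scale[OF eigensp_subspace[OF T]])
         (auto intro: subspace_0 eigensp_subspace[OF T])
  qed
qed

lemma eig_up:
  assumes T: "Vector_Spaces.linear scale scale T" and fin: "finite S" and inj: "inj_on l S"
    and jS: "j \<in> S" and y: "y \<in> sum (\<lambda>h. eigensp scale T (l h)) S"
    and z: "T y - scale \<mu> y \<in> eigensp scale T (l j)"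
  shows "\<exists>yj \<in> eigensp scale T (l j). scale (l j - \<mu>) yj = T y - scale \<mu> y \<and>
           y - yj \<in> sum (\<lambda>h. eigensp scale T (l h)) {h\<in>S. h \<noteq> j \<and> l h = \<mu>}"
proof -
  let ?E = "\<lambda>h. eigensp scale T (l h)"
  let ?z = "T y - scale \<mu> y"
  obtain g where g: "\<forall>h\<in>S. g h \<in> ?E h" "y = sum g S"
    using y unfolding sum_sets_mem[OF fin] by blast
  define g' where "g' h = scale (l h - \<mu>) (g h) - (if h = j then ?z else 0)" for h
  have g'E: "\<forall>h\<in>S. g' h \<in> ?E h" unfolding g'_def
    using g z subspace_diff[OF eigensp_subspace[OF T]] subspace_scale[OF eigensp_subspace[OF T]]
      subspace_0[OF eigensp_subspace[OF T]] by auto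
  have "sum g' S = (\<Sum>h\<in>S. scale (l h - \<mu>) (g h)) - ?z"
    unfolding g'_def using fin jS by (simp add: sum_subtractf sum.delta)
  also have "(\<Sum>h\<in>S. scale (l h - \<mu>) (g h)) = ?z"
    using g by (simp add: lin_sum[OF T] eigensp_def scale_sum_right scale_left_diff_distrib sum_subtractf)
  finally have "sum g' S = 0" by simp
  hence g'0: "\<forall>h\<in>S. g' h = 0" using eig_direct[OF T fin inj g'E] by blast
  show ?thesis
  proof (rule bexI[of _ "g j"], intro conjI)
    show "scale (l j - \<mu>) (g j) = ?z" using g'0 jS unfolding g'_def by auto
    have fin': "finite {h\<in>S. h \<noteq> j \<and> l h = \<mu>}" using fin by simp
    have "y - g j = sum g (S - {j})" using g fin jS by (simp add: sum_diff1)
    also have "\<dots> = sum g {h\<in>S. h \<noteq> j \<and> l h = \<mu>}"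
    proof (rule sum.mono_neutral_right)
      show "finite (S - {j})" using fin by simp
      show "{h \<in> S. h \<noteq> j \<and> l h = \<mu>} \<subseteq> S - {j}" by auto
      show "\<forall>i\<in>S - {j} - {h \<in> S. h \<noteq> j \<and> l h = \<mu>}. g i = 0"
        using g'0 unfolding g'_def by auto
    qed
    also have "sum g {h\<in>S. h \<noteq> j \<and> l h = \<mu>} \<in> sum ?E {h\<in>S. h \<noteq> j \<and> l h = \<mu>}"
      unfolding sum_sets_mem[OF fin']
    proof (intro exI conjI)
      show "\<forall>h\<in>{h \<in> S. h \<noteq> j \<and> l h = \<mu>}. g h \<in> ?E h" using g by blast
    qed (auto)
    finally show "y - g j \<in> sum ?E {h\<in>S. h \<noteq> j \<and> l h = \<mu>}" .
    show "g j \<in> ?E j" using g jS by auto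
  qed
qed

end



lemma powi_inj:
  fixes q :: "'k::field"
  assumes q_nz: "q \<noteq> 0" and nr: "\<forall>n::nat. n > 0 \<longrightarrow> q ^ n \<noteq> 1"
    and e: "q powi m = q powi n"
  shows "m = n"
proof (rule ccontr)
  assume ne: "m \<noteq> n"
  have "q powi (m - n) = 1" using e q_nz by (simp add: power_int_diff)
  show False
  proof (cases "m - n > 0")
    case True
    then have "q powi (m - n) = q ^ nat (m - n)" by (simp add: power_int_def)
    then show False using nr True \<open>q powi (m - n) = 1\<close> by auto
  next
    case False
    then have pos: "n - m > 0" using ne by simp
    have "q powi (n - m) = inverse (q powi (m - n))" using q_nz
      by (metis minus_diff_eq power_int_minus)
    then have "q powi (n - m) = 1" using \<open>q powi (m - n) = 1\<close> by simp
    moreover have "q powi (n - m) = q ^ nat (n - m)" using pos by (simp add: power_int_def)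
    ultimately show False using nr pos by auto
  qed
qed

locale tds = vector_space scale for scale :: "'k::field \<Rightarrow> 'v::ab_group_add \<Rightarrow> 'v" +
  fixes A As B Bs K :: "'v \<Rightarrow> 'v" and Vs Vss :: "nat \<Rightarrow> 'v set" and d :: nat
    and q a ast b bs :: 'k
  assumes q_nz: "q \<noteq> 0" and q_nonroot: "\<forall>n::nat. n > 0 \<longrightarrow> q ^ n \<noteq> 1"
    and a_nz: "a \<noteq> 0" and ast_nz: "ast \<noteq> 0"
    and linA: "Vector_Spaces.linear scale scale A"
    and linAs: "Vector_Spaces.linear scale scale As"
    and linB: "Vector_Spaces.linear scale scale B"
    and linBs: "Vector_Spaces.linear scale scale Bs"
    and linK: "Vector_Spaces.linear scale scale K"
    and spanVs: "span (\<Union>h\<le>d. Vs h) = UNIV"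
    and spanVss: "span (\<Union>h\<le>d. Vss h) = UNIV"
    and triA: "\<forall>i\<le>d. A ` Vss i \<subseteq>
        ext_sp Vss d (int i - 1) + ext_sp Vss d (int i) + ext_sp Vss d (int i + 1)"
    and triAs: "\<forall>i\<le>d. As ` Vs i \<subseteq>
        ext_sp Vs d (int i - 1) + ext_sp Vs d (int i) + ext_sp Vs d (int i + 1)"
    and eigA: "\<forall>i\<le>d. Vs i = eigensp scale A (a * q powi (2 * int i - int d))"
    and eigAs: "\<forall>i\<le>d. Vss i = eigensp scale As (ast * q powi (int d - 2 * int i))"
    and dec1: "is_decomposition scale
                 (\<lambda>i. (\<Sum>h\<le>i. Vss h) \<inter> (\<Sum>h\<le>d - i. Vs h)) d"
    and dec2: "is_decomposition scale
                 (\<lambda>i. (\<Sum>h\<in>{d - i..d}. Vss h) \<inter> (\<Sum>h\<in>{i..d}. Vs h)) d"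
    and dec3: "is_decomposition scale
                 (\<lambda>i. (\<Sum>h\<le>i. Vss h) \<inter> (\<Sum>h\<in>{i..d}. Vs h)) d"
    and B_def: "\<forall>i\<le>d. \<forall>v \<in> (\<Sum>h\<le>i. Vss h) \<inter> (\<Sum>h\<le>d - i. Vs h).
                   B v = scale (b * q powi (2 * int i - int d)) v"
    and Bs_def: "\<forall>i\<le>d. \<forall>v \<in> (\<Sum>h\<in>{d - i..d}. Vss h) \<inter> (\<Sum>h\<in>{i..d}. Vs h).
                   Bs v = scale (bs * q powi (int d - 2 * int i)) v"
    and K_def: "\<forall>i\<le>d. \<forall>v \<in> (\<Sum>h\<le>i. Vss h) \<inter> (\<Sum>h\<in>{i..d}. Vs h).
                   K v = scale (q powi (2 * int i - int d)) v"
begin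

definition th :: "int \<Rightarrow> 'k" where "th m = a * q powi (2 * m - int d)"
definition ths :: "int \<Rightarrow> 'k" where "ths m = ast * q powi (int d - 2 * m)"
definition Lo :: "(nat \<Rightarrow> 'v set) \<Rightarrow> int \<Rightarrow> 'v set" where
  "Lo E m = sum E {h. h \<le> d \<and> int h \<le> m}"
definition Hi :: "(nat \<Rightarrow> 'v set) \<Rightarrow> int \<Rightarrow> 'v set" where
  "Hi E m = sum E {h. h \<le> d \<and> m \<le> int h}"

lemma th_inj: "th m = th n \<Longrightarrow> m = n"
  using powi_inj[OF q_nz q_nonroot, of "2*m - int d" "2*n - int d"] a_nz by (auto simp: th_def)
lemma ths_inj: "ths m = ths n \<Longrightarrow> m = n"
  using powi_inj[OF q_nz q_nonroot, of "int d - 2*m" "int d - 2*n"] ast_nz by (auto simp: ths_def)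

lemma Vs_eig: "h \<le> d \<Longrightarrow> Vs h = eigensp scale A (th (int h))"
  using eigA by (simp add: th_def)
lemma Vss_eig: "h \<le> d \<Longrightarrow> Vss h = eigensp scale As (ths (int h))"
  using eigAs by (simp add: ths_def)
lemma sub_Vs: "h \<le> d \<Longrightarrow> subspace (Vs h)"
  using Vs_eig eigensp_subspace[OF linA] by simp
lemma sub_Vss: "h \<le> d \<Longrightarrow> subspace (Vss h)"
  using Vss_eig eigensp_subspace[OF linAs] by simp

lemma fin_Lo: "finite {h. h \<le> d \<and> int h \<le> m}" by simp
lemma fin_Hi: "finite {h. h \<le> d \<and> m \<le> int h}" by simp

lemma sub_Lo: "(\<And>h. h \<le> d \<Longrightarrow> subspace (E h)) \<Longrightarrow> subspace (Lo E m)"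
  unfolding Lo_def by (rule subspace_sum_sets) auto
lemma sub_Hi: "(\<And>h. h \<le> d \<Longrightarrow> subspace (E h)) \<Longrightarrow> subspace (Hi E m)"
  unfolding Hi_def by (rule subspace_sum_sets) auto

lemma Lo_mono: "(\<And>h. h \<le> d \<Longrightarrow> subspace (E h)) \<Longrightarrow> m \<le> m' \<Longrightarrow> Lo E m \<subseteq> Lo E m'"
  unfolding Lo_def by (rule sum_sets_mono) (auto intro: subspace_0)
lemma Hi_mono: "(\<And>h. h \<le> d \<Longrightarrow> subspace (E h)) \<Longrightarrow> m \<le> m' \<Longrightarrow> Hi E m' \<subseteq> Hi E m"
  unfolding Hi_def by (rule sum_sets_mono) (auto intro: subspace_0)
lemma Lo_neg: "m < 0 \<Longrightarrow> Lo E m = {0}"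
proof -
  assume "m < 0" then have "{h. h \<le> d \<and> int h \<le> m} = {}" by auto
  then show ?thesis unfolding Lo_def by (simp only: sum.empty set_zero)
qed
lemma Hi_big: "m > int d \<Longrightarrow> Hi E m = {0}"
proof -
  assume "m > int d" then have "{h. h \<le> d \<and> m \<le> int h} = {}" by auto
  then show ?thesis unfolding Hi_def by (simp only: sum.empty set_zero)
qed
lemma E_Lo: "(\<And>h. h \<le> d \<Longrightarrow> subspace (E h)) \<Longrightarrow> h \<le> d \<Longrightarrow> int h \<le> m \<Longrightarrow> x \<in> E h \<Longrightarrow> x \<in> Lo E m"
  unfolding Lo_def by (rule sum_sets_sub) (auto intro: subspace_0)
lemma E_Hi: "(\<And>h. h \<le> d \<Longrightarrow> subspace (E h)) \<Longrightarrow> h \<le> d \<Longrightarrow> m \<le> int h \<Longrightarrow> x \<in> E h \<Longrightarrow> x \<in> Hi E m"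
  unfolding Hi_def by (rule sum_sets_sub) (auto intro: subspace_0)

lemma ext_Lo: "(\<And>h. h \<le> d \<Longrightarrow> subspace (E h)) \<Longrightarrow> j \<le> m \<Longrightarrow> ext_sp E d j \<subseteq> Lo E m"
  unfolding ext_sp_def
  apply (auto intro: subspace_0 sub_Lo)
  apply (rule E_Lo[where h="nat j"])
     apply auto
  done
lemma ext_Hi: "(\<And>h. h \<le> d \<Longrightarrow> subspace (E h)) \<Longrightarrow> m \<le> j \<Longrightarrow> ext_sp E d j \<subseteq> Hi E m"
  unfolding ext_sp_def
  apply (auto intro: subspace_0 sub_Hi)
  apply (rule E_Hi[where h="nat j"])
     apply auto
  done

lemma plus3_sub: "subspace P \<Longrightarrow> X1 \<subseteq> P \<Longrightarrow> X2 \<subseteq> P \<Longrightarrow> X3 \<subseteq> P \<Longrightarrow> X1 + X2 + X3 \<subseteq> P"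
  by (auto elim!: set_plus_elim intro!: subspace_add)

lemma tri_Lo:
  assumes sub: "\<And>h. h \<le> d \<Longrightarrow> subspace (E h)" and T: "Vector_Spaces.linear scale scale T"
    and tri: "\<forall>i\<le>d. T ` E i \<subseteq> ext_sp E d (int i - 1) + ext_sp E d (int i) + ext_sp E d (int i + 1)"
    and x: "x \<in> Lo E m"
  shows "T x \<in> Lo E (m + 1)"
proof -
  have "T x - scale 0 x \<in> Lo E (m + 1)"
  proof (rule sum_sets_map[OF fin_Lo sub_Lo[OF sub] T _ x[unfolded Lo_def]])
    fix h y assume h: "h \<in> {h. h \<le> d \<and> int h \<le> m}" and y: "y \<in> E h"
    have "T y \<in> ext_sp E d (int h - 1) + ext_sp E d (int h) + ext_sp E d (int h + 1)"
      using tri h y by blast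
    also have "\<dots> \<subseteq> Lo E (m + 1)"
      using h by (intro plus3_sub sub_Lo ext_Lo sub) auto
    finally show "T y - scale 0 y \<in> Lo E (m + 1)" by simp
  qed
  then show ?thesis by simp
qed

lemma tri_Hi:
  assumes sub: "\<And>h. h \<le> d \<Longrightarrow> subspace (E h)" and T: "Vector_Spaces.linear scale scale T"
    and tri: "\<forall>i\<le>d. T ` E i \<subseteq> ext_sp E d (int i - 1) + ext_sp E d (int i) + ext_sp E d (int i + 1)"
    and x: "x \<in> Hi E m"
  shows "T x \<in> Hi E (m - 1)"
proof -
  have "T x - scale 0 x \<in> Hi E (m - 1)"
  proof (rule sum_sets_map[OF fin_Hi sub_Hi[OF sub] T _ x[unfolded Hi_def]])
    fix h y assume h: "h \<in> {h. h \<le> d \<and> m \<le> int h}" and y: "y \<in> E h"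
    have "T y \<in> ext_sp E d (int h - 1) + ext_sp E d (int h) + ext_sp E d (int h + 1)"
      using tri h y by blast
    also have "\<dots> \<subseteq> Hi E (m - 1)"
      using h by (intro plus3_sub sub_Hi ext_Hi sub) auto
    finally show "T y - scale 0 y \<in> Hi E (m - 1)" by simp
  qed
  then show ?thesis by simp
qed

lemma eig_Lo:
  assumes T: "Vector_Spaces.linear scale scale T" and eig: "\<And>h. h \<le> d \<Longrightarrow> E h = eigensp scale T (lam (int h))"
    and x: "x \<in> Lo E m"
  shows "T x - scale (lam m) x \<in> Lo E (m - 1)"
proof -
  have sub: "\<And>h. h \<le> d \<Longrightarrow> subspace (E h)" using eig eigensp_subspace[OF T] by simp
  have eqs: "sum E S = sum (\<lambda>h. eigensp scale T (lam (int h))) S" if "S \<subseteq> {..d}" for S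
    using that eig by (intro sum.cong) auto
  have "x \<in> sum (\<lambda>h. eigensp scale T (lam (int h))) {h. h \<le> d \<and> int h \<le> m}"
    using x unfolding Lo_def by (subst eqs[symmetric]) auto
  from eig_shift[OF T fin_Lo this, of "lam m"]
  have "T x - scale (lam m) x \<in> sum E {h \<in> {h. h \<le> d \<and> int h \<le> m}. lam (int h) \<noteq> lam m}"
    by (subst eqs) auto
  also have "\<dots> \<subseteq> Lo E (m - 1)" unfolding Lo_def
    apply (rule sum_sets_mono)
      apply simp
     apply clarsimp
     apply (metis le_less)
    apply (auto intro: subspace_0 sub)
    done
  finally show ?thesis .
qed

lemma eig_Hi:
  assumes T: "Vector_Spaces.linear scale scale T" and eig: "\<And>h. h \<le> d \<Longrightarrow> E h = eigensp scale T (lam (int h))"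
    and x: "x \<in> Hi E m"
  shows "T x - scale (lam m) x \<in> Hi E (m + 1)"
proof -
  have sub: "\<And>h. h \<le> d \<Longrightarrow> subspace (E h)" using eig eigensp_subspace[OF T] by simp
  have eqs: "sum E S = sum (\<lambda>h. eigensp scale T (lam (int h))) S" if "S \<subseteq> {..d}" for S
    using that eig by (intro sum.cong) auto
  have "x \<in> sum (\<lambda>h. eigensp scale T (lam (int h))) {h. h \<le> d \<and> m \<le> int h}"
    using x unfolding Hi_def by (subst eqs[symmetric]) auto
  from eig_shift[OF T fin_Hi this, of "lam m"]
  have "T x - scale (lam m) x \<in> sum E {h \<in> {h. h \<le> d \<and> m \<le> int h}. lam (int h) \<noteq> lam m}"
    by (subst eqs) auto
  also have "\<dots> \<subseteq> Hi E (m + 1)" unfolding Hi_def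
    apply (rule sum_sets_mono)
      apply simp
     apply clarsimp
     apply (metis le_less zless_imp_add1_zle)
    apply (auto intro: subspace_0 sub)
    done
  finally show ?thesis .
qed


definition "FF m = Lo Vss m"
definition "GG m = Hi Vs m"
definition "HH m = Lo Vs (int d - m)"
definition "FP m = Hi Vss (int d - m)"
definition "UU m = FF m \<inter> GG m"
definition "WW m = FF m \<inter> HH m"
definition "XX m = FP m \<inter> GG m"

lemma subFF: "subspace (FF m)" unfolding FF_def by (rule sub_Lo[OF sub_Vss])
lemma subGG: "subspace (GG m)" unfolding GG_def by (rule sub_Hi[OF sub_Vs])
lemma subHH: "subspace (HH m)" unfolding HH_def by (rule sub_Lo[OF sub_Vs])
lemma subFP: "subspace (FP m)" unfolding FP_def by (rule sub_Hi[OF sub_Vss])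
lemma subUU: "subspace (UU m)" unfolding UU_def by (intro subspace_inter subFF subGG)
lemma subWW: "subspace (WW m)" unfolding WW_def by (intro subspace_inter subFF subHH)
lemma subXX: "subspace (XX m)" unfolding XX_def by (intro subspace_inter subFP subGG)

lemma FF_mono: "m \<le> m' \<Longrightarrow> FF m \<subseteq> FF m'" unfolding FF_def by (rule Lo_mono[OF sub_Vss])
lemma GG_mono: "m \<le> m' \<Longrightarrow> GG m' \<subseteq> GG m" unfolding GG_def by (rule Hi_mono[OF sub_Vs])
lemma HH_mono: assumes "m \<le> m'" shows "HH m' \<subseteq> HH m"
  unfolding HH_def apply (rule Lo_mono[OF sub_Vs]) using assms by auto
lemma FP_mono: assumes "m \<le> m'" shows "FP m \<subseteq> FP m'"
  unfolding FP_def apply (rule Hi_mono[OF sub_Vss]) using assms by auto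

lemma A_FF: "x \<in> FF m \<Longrightarrow> A x \<in> FF (m + 1)"
  unfolding FF_def by (rule tri_Lo[OF sub_Vss linA triA])
lemma A_FP: "x \<in> FP m \<Longrightarrow> A x \<in> FP (m + 1)"
  unfolding FP_def using tri_Hi[OF sub_Vss linA triA, of x "int d - m"] by (simp add: algebra_simps)
lemma As_GG: "x \<in> GG m \<Longrightarrow> As x \<in> GG (m - 1)"
  unfolding GG_def by (rule tri_Hi[OF sub_Vs linAs triAs])
lemma As_HH: "x \<in> HH m \<Longrightarrow> As x \<in> HH (m - 1)"
  unfolding HH_def using tri_Lo[OF sub_Vs linAs triAs, of x "int d - m"] by (simp add: algebra_simps)
lemma A_GG: "x \<in> GG m \<Longrightarrow> A x - scale (th m) x \<in> GG (m + 1)"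
  unfolding GG_def by (rule eig_Hi[where E=Vs and lam=th, OF linA Vs_eig])
lemma A_HH: "x \<in> HH m \<Longrightarrow> A x - scale (th (int d - m)) x \<in> HH (m + 1)"
  unfolding HH_def using eig_Lo[where E=Vs and lam=th, OF linA Vs_eig, of x "int d - m"] by (simp add: algebra_simps)
lemma As_FF: "x \<in> FF m \<Longrightarrow> As x - scale (ths m) x \<in> FF (m - 1)"
  unfolding FF_def by (rule eig_Lo[where E=Vss and lam=ths, OF linAs Vss_eig])
lemma As_FP: "x \<in> FP m \<Longrightarrow> As x - scale (ths (int d - m)) x \<in> FP (m - 1)"
  unfolding FP_def using eig_Hi[where E=Vss and lam=ths, OF linAs Vss_eig, of x "int d - m"] by (simp add: algebra_simps)

lemma U_A: "u \<in> UU m \<Longrightarrow> A u - scale (th m) u \<in> UU (m + 1)"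
  unfolding UU_def using A_GG A_FF FF_mono[of m "m+1"]
  by (auto intro!: subspace_diff[OF subFF] subspace_scale[OF subFF])
lemma U_As: "u \<in> UU m \<Longrightarrow> As u - scale (ths m) u \<in> UU (m - 1)"
  unfolding UU_def using As_FF As_GG GG_mono[of "m-1" m]
  by (auto intro!: subspace_diff[OF subGG] subspace_scale[OF subGG])
lemma W_A: "u \<in> WW m \<Longrightarrow> A u - scale (th (int d - m)) u \<in> WW (m + 1)"
  unfolding WW_def using A_HH A_FF FF_mono[of m "m+1"]
  by (auto intro!: subspace_diff[OF subFF] subspace_scale[OF subFF])
lemma W_As: "u \<in> WW m \<Longrightarrow> As u - scale (ths m) u \<in> WW (m - 1)"
  unfolding WW_def using As_FF As_HH HH_mono[of "m-1" m]
  by (auto intro!: subspace_diff[OF subHH] subspace_scale[OF subHH])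
lemma X_A: "u \<in> XX m \<Longrightarrow> A u - scale (th m) u \<in> XX (m + 1)"
  unfolding XX_def using A_GG A_FP FP_mono[of m "m+1"]
  by (auto intro!: subspace_diff[OF subFP] subspace_scale[OF subFP])
lemma X_As: "u \<in> XX m \<Longrightarrow> As u - scale (ths (int d - m)) u \<in> XX (m - 1)"
  unfolding XX_def using As_FP As_GG GG_mono[of "m-1" m]
  by (auto intro!: subspace_diff[OF subGG] subspace_scale[OF subGG])

lemma conv_FF: "i \<le> d \<Longrightarrow> (\<Sum>h\<le>i. Vss h) = FF (int i)"
  unfolding FF_def Lo_def by (rule arg_cong[where f="sum Vss"]) auto
lemma conv_GG: "i \<le> d \<Longrightarrow> (\<Sum>h\<in>{i..d}. Vs h) = GG (int i)"
  unfolding GG_def Hi_def by (rule arg_cong[where f="sum Vs"]) auto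
lemma conv_HH: "i \<le> d \<Longrightarrow> (\<Sum>h\<le>d-i. Vs h) = HH (int i)"
  unfolding HH_def Lo_def by (rule arg_cong[where f="sum Vs"]) auto
lemma conv_FP: "i \<le> d \<Longrightarrow> (\<Sum>h\<in>{d-i..d}. Vss h) = FP (int i)"
  unfolding FP_def Hi_def by (rule arg_cong[where f="sum Vss"]) auto

lemma UU_out: assumes "m < 0 \<or> m > int d" shows "UU m = {0}"
proof -
  have "UU m \<subseteq> {0}"
  proof (cases "m < 0")
    case True
    then have "FF m = {0}" unfolding FF_def by (rule Lo_neg)
    then show ?thesis unfolding UU_def by blast
  next
    case False
    then have "GG m = {0}" unfolding GG_def using assms by (intro Hi_big) simp
    then show ?thesis unfolding UU_def by blast
  qed
  then show ?thesis using subspace_0[OF subUU, of m] by blast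
qed
lemma WW_out: assumes "m < 0 \<or> m > int d" shows "WW m = {0}"
proof -
  have "WW m \<subseteq> {0}"
  proof (cases "m < 0")
    case True
    then have "FF m = {0}" unfolding FF_def by (rule Lo_neg)
    then show ?thesis unfolding WW_def by blast
  next
    case False
    then have "HH m = {0}" unfolding HH_def using assms by (intro Lo_neg) simp
    then show ?thesis unfolding WW_def by blast
  qed
  then show ?thesis using subspace_0[OF subWW, of m] by blast
qed
lemma XX_out: assumes "m < 0 \<or> m > int d" shows "XX m = {0}"
proof -
  have "XX m \<subseteq> {0}"
  proof (cases "m < 0")
    case True
    then have "FP m = {0}" unfolding FP_def by (intro Hi_big) simp
    then show ?thesis unfolding XX_def by blast
  next
    case False
    then have "GG m = {0}" unfolding GG_def using assms by (intro Hi_big) simp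
    then show ?thesis unfolding XX_def by blast
  qed
  then show ?thesis using subspace_0[OF subXX, of m] by blast
qed

lemma K_U: assumes u: "u \<in> UU m" shows "K u = scale (q powi (2 * m - int d)) u"
proof (cases "m < 0 \<or> m > int d")
  case True then show ?thesis using u UU_out lin_zero[OF linK] by auto
next
  case False
  then obtain i where i: "m = int i" "i \<le> d" by (metis int_nat_eq linorder_not_less nat_le_iff)
  then show ?thesis using K_def u unfolding UU_def by (simp add: conv_FF conv_GG)
qed
lemma B_W: assumes u: "u \<in> WW m" shows "B u = scale (b * q powi (2 * m - int d)) u"
proof (cases "m < 0 \<or> m > int d")
  case True then show ?thesis using u WW_out lin_zero[OF linB] by auto
next
  case False
  then obtain i where i: "m = int i" "i \<le> d" by (metis int_nat_eq linorder_not_less nat_le_iff)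
  then show ?thesis using B_def u unfolding WW_def by (simp add: conv_FF conv_HH)
qed
lemma Bs_X: assumes u: "u \<in> XX m" shows "Bs u = scale (bs * q powi (int d - 2 * m)) u"
proof (cases "m < 0 \<or> m > int d")
  case True then show ?thesis using u XX_out lin_zero[OF linBs] by auto
next
  case False
  then obtain i where i: "m = int i" "i \<le> d" by (metis int_nat_eq linorder_not_less nat_le_iff)
  then show ?thesis using Bs_def u unfolding XX_def by (simp add: conv_FP conv_GG)
qed

lemma dec_cong: assumes e: "\<And>i. i \<le> d \<Longrightarrow> P i = Q i"
  shows "is_decomposition scale P d = is_decomposition scale Q d"
proof -
  have s: "sum P {..d} = sum Q {..d}" using e by (intro sum.cong) auto
  show ?thesis unfolding is_decomposition_def s using e by simp
qed

lemma decU: "is_decomposition scale (\<lambda>i. UU (int i)) d"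
  using dec3 by (subst dec_cong[where Q="\<lambda>i. (\<Sum>h\<le>i. Vss h) \<inter> (\<Sum>h\<in>{i..d}. Vs h)"])
    (auto simp: UU_def conv_FF conv_GG)
lemma decW: "is_decomposition scale (\<lambda>i. WW (int i)) d"
  using dec1 by (subst dec_cong[where Q="\<lambda>i. (\<Sum>h\<le>i. Vss h) \<inter> (\<Sum>h\<le>d - i. Vs h)"])
    (auto simp: WW_def conv_FF conv_HH)
lemma decX: "is_decomposition scale (\<lambda>i. XX (int i)) d"
  using dec2 by (subst dec_cong[where Q="\<lambda>i. (\<Sum>h\<in>{d - i..d}. Vss h) \<inter> (\<Sum>h\<in>{i..d}. Vs h)"])
    (auto simp: XX_def conv_FP conv_GG)

lemma dec_ext:
  assumes dec: "is_decomposition scale P d" and f: "additive f" and g: "additive g"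
    and eq: "\<And>i u. i \<le> d \<Longrightarrow> u \<in> P i \<Longrightarrow> f u = g u"
  shows "f x = g x"
proof -
  have "x \<in> sum P {..d}" using dec unfolding is_decomposition_def by auto
  then obtain s where s: "\<forall>i\<in>{..d}. s i \<in> P i" "x = sum s {..d}"
    unfolding sum_sets_mem[OF finite_atMost] by blast
  show ?thesis using s eq by (simp add: additive.sum[OF f] additive.sum[OF g])
qed


lemma sum_UNIV:
  assumes sub: "\<And>h. h \<le> d \<Longrightarrow> subspace (E h)" and sp: "span (\<Union>h\<le>d. E h) = UNIV"
  shows "sum E {..d} = UNIV"
proof -
  have "span (\<Union>h\<le>d. E h) \<subseteq> sum E {..d}"
  proof (rule span_minimal)
    show "(\<Union>h\<le>d. E h) \<subseteq> sum E {..d}"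
      by (auto intro!: sum_sets_sub intro: subspace_0 sub)
    show "subspace (sum E {..d})" by (rule subspace_sum_sets) (auto intro: sub)
  qed
  then show ?thesis using sp by auto
qed

lemma Vs_UNIV: "sum Vs {..d} = UNIV" by (rule sum_UNIV[OF sub_Vs spanVs])
lemma Vss_UNIV: "sum Vss {..d} = UNIV" by (rule sum_UNIV[OF sub_Vss spanVss])

lemma eig_up_loc:
  assumes T: "Vector_Spaces.linear scale scale T"
    and eig: "\<And>h. h \<le> d \<Longrightarrow> E h = eigensp scale T (lam (int h))"
    and inj: "\<And>m n. lam m = lam n \<Longrightarrow> m = n"
    and sp: "sum E {..d} = UNIV" and j: "j \<le> d"
    and z: "T y - scale (lam m) y \<in> E j"
  shows "\<exists>yj \<in> E j. scale (lam (int j) - lam m) yj = T y - scale (lam m) y \<and>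
           y - yj \<in> sum E {h. h \<le> d \<and> int h = m}"
proof -
  have eqs: "sum E S = sum (\<lambda>h. eigensp scale T (lam (int h))) S" if "S \<subseteq> {..d}" for S
    using that eig by (intro sum.cong) auto
  have injo: "inj_on (\<lambda>h. lam (int h)) {..d}" by (auto intro!: inj_onI dest: inj)
  have y: "y \<in> sum (\<lambda>h. eigensp scale T (lam (int h))) {..d}" using sp eqs by auto
  have z': "T y - scale (lam m) y \<in> eigensp scale T (lam (int j))" using z eig j by auto
  obtain yj where yj: "yj \<in> eigensp scale T (lam (int j))"
    "scale (lam (int j) - lam m) yj = T y - scale (lam m) y"
    "y - yj \<in> sum (\<lambda>h. eigensp scale T (lam (int h))) {h\<in>{..d}. h \<noteq> j \<and> lam (int h) = lam m}"
    using eig_up[OF T finite_atMost injo _ y z'] j by auto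
  have "y - yj \<in> sum E {h\<in>{..d}. h \<noteq> j \<and> lam (int h) = lam m}"
    using yj(3) by (subst eqs) auto
  also have "\<dots> \<subseteq> sum E {h. h \<le> d \<and> int h = m}"
    by (rule sum_sets_mono) (auto dest: inj intro: subspace_0 eigensp_subspace[OF T] simp: eig)
  finally show ?thesis using yj eig j by auto
qed

lemma form1:
  assumes X: "X = scale s1 u + scale t1 w" and Y: "Y = scale s2 u + scale t2 w"
    and c: "q * s1 - inverse q * s2 = c" and t: "q * t1 = inverse q * t2"
  shows "scale q X - scale (inverse q) Y = scale c u"
proof -
  have "scale q X - scale (inverse q) Y = scale (q * s1 - inverse q * s2) u + scale (q * t1 - inverse q * t2) w"
    unfolding X Y by (simp add: algebra_simps)
  then show ?thesis using c t by simp
qed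

lemma qq_nz: "q - inverse q \<noteq> 0"
proof
  assume "q - inverse q = 0"
  then have "q * q = 1" using q_nz by (simp add: field_simps)
  then have "q ^ 2 = 1" by (simp add: power2_eq_square)
  then show False using q_nonroot by auto
qed

lemma q2_nz: "1 - q^2 \<noteq> 0"
  using q_nonroot by force

lemma form2:
  assumes X: "X = scale s1 u + scale t1 w" and Y: "Y = scale s2 u + scale t2 w"
    and c: "q * s1 - inverse q * s2 = (q - inverse q) * c" and t: "q * t1 = inverse q * t2"
  shows "scale (inverse (q - inverse q)) (scale q X - scale (inverse q) Y) = scale c u"
  using form1[OF X Y c t] qq_nz by simp

lemma add_form1:
  assumes "additive T1" "additive T2" "additive T3" "additive T4"
  shows "additive (\<lambda>v. scale c1 (T1 (T2 v)) - scale c2 (T3 (T4 v)))"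
  unfolding additive_def using assms
  by (simp add: additive.add scale_right_distrib)

lemma add_form2:
  assumes "additive T1" "additive T2" "additive T3" "additive T4"
  shows "additive (\<lambda>v. scale c (scale c1 (T1 (T2 v)) - scale c2 (T3 (T4 v))))"
  unfolding additive_def using assms
  by (simp add: additive.add scale_right_distrib scale_right_diff_distrib)

lemma add_scale: "additive (\<lambda>v. scale c v)"
  unfolding additive_def by (simp add: scale_right_distrib)

lemma P_nz: "q powi e \<noteq> 0" using q_nz by simp
lemma pw_up: "q powi (2 * (i + 1) - int d) = q powi (2 * i - int d) * q^2"
proof -
  have e: "2 * (i + 1) - int d = (2 * i - int d) + 2" by simp
  show ?thesis unfolding e by (subst power_int_add) (use q_nz in auto)
qed
lemma pw_dn: "q powi (2 * (i - 1) - int d) = q powi (2 * i - int d) / q^2"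
proof -
  have e: "2 * i - int d = (2 * (i - 1) - int d) + 2" by simp
  have "q powi (2 * i - int d) = q powi (2 * (i - 1) - int d) * q^2"
    unfolding e by (subst power_int_add) (use q_nz in auto)
  then show ?thesis using q_nz by simp
qed
lemma pw_neg: "q powi (int d - 2 * i) = inverse (q powi (2 * i - int d))"
proof -
  have e: "int d - 2 * i = - (2 * i - int d)" by simp
  show ?thesis unfolding e by (rule power_int_minus)
qed
lemma th_i: "th i = a * q powi (2 * i - int d)" by (simp add: th_def)
lemma ths_i: "ths i = ast * inverse (q powi (2 * i - int d))" unfolding ths_def pw_neg ..
lemma th_di: "th (int d - i) = a * inverse (q powi (2 * i - int d))"
proof -
  have e: "2 * (int d - i) - int d = - (2 * i - int d)" by simp
  show ?thesis unfolding th_def e power_int_minus ..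
qed
lemma ths_di: "ths (int d - i) = ast * q powi (2 * i - int d)"
proof -
  have "int d - 2 * (int d - i) = 2 * i - int d" by simp
  then show ?thesis by (simp add: ths_def)
qed


lemmas addA = lin_additive[OF linA] and addAs = lin_additive[OF linAs]
   and addB = lin_additive[OF linB] and addBs = lin_additive[OF linBs]
   and addK = lin_additive[OF linK]

lemma rel_AB: "scale q (A (B v)) - scale (inverse q) (B (A v)) = scale ((q - inverse q) * a * b) v"
proof -
  have "(\<lambda>v. scale q (A (B v)) - scale (inverse q) (B (A v))) v = (\<lambda>v. scale ((q - inverse q) * a * b) v) v"
  proof (rule dec_ext[OF decW add_form1[OF addA addB addB addA] add_scale])
    fix i u assume u: "u \<in> WW (int i)"
    define P where "P = q powi (2 * int i - int d)"
    have Pnz: "P \<noteq> 0" unfolding P_def by (rule P_nz)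
    define r where "r = A u - scale (th (int d - int i)) u"
    have r: "r \<in> WW (int i + 1)" using W_A[OF u] unfolding r_def .
    have Bu: "B u = scale (b * P) u" using B_W[OF u] unfolding P_def .
    have Br: "B r = scale (b * (P * q^2)) r" using B_W[OF r] unfolding pw_up P_def .
    have Au: "A u = scale (a * inverse P) u + r" unfolding r_def th_di P_def by simp
    have X: "A (B u) = scale (b * P * (a * inverse P)) u + scale (b * P) r"
      by (simp add: Bu lin_scale[OF linA] Au scale_right_distrib)
    have Y: "B (A u) = scale (a * inverse P * (b * P)) u + scale (b * (P * q^2)) r"
      by (simp add: Au lin_add[OF linB] lin_scale[OF linB] Bu Br)
    show "scale q (A (B u)) - scale (inverse q) (B (A u)) = scale ((q - inverse q) * a * b) u"
      by (rule form1[OF X Y]) (use Pnz q_nz in \<open>simp_all add: field_simps power2_eq_square\<close>)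
  qed
  then show ?thesis by simp
qed

lemma rel_BAs: "scale q (B (As v)) - scale (inverse q) (As (B v)) = scale ((q - inverse q) * ast * b) v"
proof -
  have "(\<lambda>v. scale q (B (As v)) - scale (inverse q) (As (B v))) v = (\<lambda>v. scale ((q - inverse q) * ast * b) v) v"
  proof (rule dec_ext[OF decW add_form1[OF addB addAs addAs addB] add_scale])
    fix i u assume u: "u \<in> WW (int i)"
    define P where "P = q powi (2 * int i - int d)"
    have Pnz: "P \<noteq> 0" unfolding P_def by (rule P_nz)
    define l where "l = As u - scale (ths (int i)) u"
    have l: "l \<in> WW (int i - 1)" using W_As[OF u] unfolding l_def .
    have Bu: "B u = scale (b * P) u" using B_W[OF u] unfolding P_def .
    have Bl: "B l = scale (b * (P / q^2)) l" using B_W[OF l] unfolding pw_dn P_def .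
    have Asu: "As u = scale (ast * inverse P) u + l" unfolding l_def ths_i P_def by simp
    have X: "B (As u) = scale (ast * inverse P * (b * P)) u + scale (b * (P / q^2)) l"
      by (simp add: Asu lin_add[OF linB] lin_scale[OF linB] Bu Bl)
    have Y: "As (B u) = scale (b * P * (ast * inverse P)) u + scale (b * P) l"
      by (simp add: Bu lin_scale[OF linAs] Asu scale_right_distrib)
    show "scale q (B (As u)) - scale (inverse q) (As (B u)) = scale ((q - inverse q) * ast * b) u"
      by (rule form1[OF X Y]) (use Pnz q_nz in \<open>simp_all add: field_simps power2_eq_square\<close>)
  qed
  then show ?thesis by simp
qed

lemma rel_BsA: "scale q (Bs (A v)) - scale (inverse q) (A (Bs v)) = scale ((q - inverse q) * a * bs) v"
proof -
  have "(\<lambda>v. scale q (Bs (A v)) - scale (inverse q) (A (Bs v))) v = (\<lambda>v. scale ((q - inverse q) * a * bs) v) v"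
  proof (rule dec_ext[OF decX add_form1[OF addBs addA addA addBs] add_scale])
    fix i u assume u: "u \<in> XX (int i)"
    define P where "P = q powi (2 * int i - int d)"
    have Pnz: "P \<noteq> 0" unfolding P_def by (rule P_nz)
    define r where "r = A u - scale (th (int i)) u"
    have r: "r \<in> XX (int i + 1)" using X_A[OF u] unfolding r_def .
    have Bsu: "Bs u = scale (bs * inverse P) u" using Bs_X[OF u] unfolding pw_neg P_def .
    have Bsr: "Bs r = scale (bs * inverse (P * q^2)) r" using Bs_X[OF r] unfolding pw_neg pw_up P_def .
    have Au: "A u = scale (a * P) u + r" unfolding r_def th_i P_def by simp
    have X: "Bs (A u) = scale (a * P * (bs * inverse P)) u + scale (bs * inverse (P * q^2)) r"
      by (simp add: Au lin_add[OF linBs] lin_scale[OF linBs] Bsu Bsr)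
    have Y: "A (Bs u) = scale (bs * inverse P * (a * P)) u + scale (bs * inverse P) r"
      by (simp add: Bsu lin_scale[OF linA] Au scale_right_distrib)
    show "scale q (Bs (A u)) - scale (inverse q) (A (Bs u)) = scale ((q - inverse q) * a * bs) u"
      by (rule form1[OF X Y]) (use Pnz q_nz in \<open>simp_all add: field_simps power2_eq_square\<close>)
  qed
  then show ?thesis by simp
qed

lemma rel_AsBs: "scale q (As (Bs v)) - scale (inverse q) (Bs (As v)) = scale ((q - inverse q) * ast * bs) v"
proof -
  have "(\<lambda>v. scale q (As (Bs v)) - scale (inverse q) (Bs (As v))) v = (\<lambda>v. scale ((q - inverse q) * ast * bs) v) v"
  proof (rule dec_ext[OF decX add_form1[OF addAs addBs addBs addAs] add_scale])
    fix i u assume u: "u \<in> XX (int i)"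
    define P where "P = q powi (2 * int i - int d)"
    have Pnz: "P \<noteq> 0" unfolding P_def by (rule P_nz)
    define l where "l = As u - scale (ths (int d - int i)) u"
    have l: "l \<in> XX (int i - 1)" using X_As[OF u] unfolding l_def .
    have Bsu: "Bs u = scale (bs * inverse P) u" using Bs_X[OF u] unfolding pw_neg P_def .
    have Bsl: "Bs l = scale (bs * inverse (P / q^2)) l" using Bs_X[OF l] unfolding pw_neg pw_dn P_def .
    have Asu: "As u = scale (ast * P) u + l" unfolding l_def ths_di P_def by simp
    have X: "As (Bs u) = scale (bs * inverse P * (ast * P)) u + scale (bs * inverse P) l"
      by (simp add: Bsu lin_scale[OF linAs] Asu scale_right_distrib)
    have Y: "Bs (As u) = scale (ast * P * (bs * inverse P)) u + scale (bs * inverse (P / q^2)) l"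
      by (simp add: Asu lin_add[OF linBs] lin_scale[OF linBs] Bsu Bsl)
    show "scale q (As (Bs u)) - scale (inverse q) (Bs (As u)) = scale ((q - inverse q) * ast * bs) u"
      by (rule form1[OF X Y]) (use Pnz q_nz in \<open>simp_all add: field_simps power2_eq_square\<close>)
  qed
  then show ?thesis by simp
qed


lemma scale_solve: assumes "al \<noteq> 0" "scale al y = scale be v" shows "y = scale (be / al) v"
proof -
  have "y = scale (inverse al) (scale al y)" using assms(1) by simp
  also have "\<dots> = scale (be / al) v" using assms(2) by (simp add: field_simps)
  finally show ?thesis .
qed

lemma qsq: "q^2 \<noteq> 1" using q_nonroot by auto

lemma C1: assumes j: "j \<le> d" and v: "v \<in> Vs j" shows "B v \<in> GG (int j - 1)"
proof -
  define y where "y = B v"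
  have Av: "A v = scale (th (int j)) v" using v Vs_eig[OF j] by (simp add: eigensp_def)
  have e: "scale q (A y) - scale (inverse q) (scale (th (int j)) y) = scale ((q - inverse q) * a * b) v"
    using rel_AB[of v] unfolding y_def Av lin_scale[OF linB] .
  have th1: "th (int j - 1) = inverse q * inverse q * th (int j)"
    unfolding th_i pw_dn using q_nz by (simp add: field_simps power2_eq_square)
  have "A y - scale (th (int j - 1)) y = scale (inverse q) (scale q (A y) - scale (inverse q) (scale (th (int j)) y))"
    unfolding th1 using q_nz by (simp add: scale_right_diff_distrib)
  also have "\<dots> = scale (inverse q * ((q - inverse q) * a * b)) v" unfolding e by simp
  finally have z: "A y - scale (th (int j - 1)) y \<in> Vs j"
    using v subspace_scale[OF sub_Vs[OF j]] by simp
  obtain yj where yj: "yj \<in> Vs j" "y - yj \<in> sum Vs {h. h \<le> d \<and> int h = int j - 1}"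
    using eig_up_loc[OF linA Vs_eig th_inj Vs_UNIV j z] by blast
  have "sum Vs {h. h \<le> d \<and> int h = int j - 1} \<subseteq> GG (int j - 1)"
    unfolding GG_def Hi_def by (rule sum_sets_mono) (auto intro: subspace_0 sub_Vs)
  then have "y - yj \<in> GG (int j - 1)" using yj by blast
  moreover have "yj \<in> GG (int j - 1)" unfolding GG_def using yj j by (intro E_Hi[OF sub_Vs]) auto
  ultimately have "(y - yj) + yj \<in> GG (int j - 1)" by (rule subspace_add[OF subGG])
  then show ?thesis unfolding y_def by simp
qed

lemma B_GG: assumes x: "x \<in> GG m" shows "B x \<in> GG (m - 1)"
proof -
  have "B x - scale 0 x \<in> GG (m - 1)"
  proof (rule sum_sets_map[OF fin_Hi subGG linB _ x[unfolded GG_def Hi_def]])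
    fix h y assume h: "h \<in> {h. h \<le> d \<and> m \<le> int h}" and y: "y \<in> Vs h"
    have "B y \<in> GG (int h - 1)" using C1 h y by auto
    also have "\<dots> \<subseteq> GG (m - 1)" using h by (intro GG_mono) auto
    finally show "B y - scale 0 y \<in> GG (m - 1)" by simp
  qed
  then show ?thesis by simp
qed

lemma C4: assumes j: "j \<le> d" and v: "v \<in> Vss j" shows "Bs v \<in> FF (int j + 1)"
proof -
  define y where "y = Bs v"
  have Asv: "As v = scale (ths (int j)) v" using v Vss_eig[OF j] by (simp add: eigensp_def)
  have e: "scale q (As y) - scale (inverse q) (scale (ths (int j)) y) = scale ((q - inverse q) * ast * bs) v"
    using rel_AsBs[of v] unfolding y_def Asv lin_scale[OF linBs] .
  have th1: "ths (int j + 1) = inverse q * inverse q * ths (int j)"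
    unfolding ths_i pw_up using q_nz by (simp add: field_simps power2_eq_square)
  have "As y - scale (ths (int j + 1)) y = scale (inverse q) (scale q (As y) - scale (inverse q) (scale (ths (int j)) y))"
    unfolding th1 using q_nz by (simp add: scale_right_diff_distrib)
  also have "\<dots> = scale (inverse q * ((q - inverse q) * ast * bs)) v" unfolding e by simp
  finally have z: "As y - scale (ths (int j + 1)) y \<in> Vss j"
    using v subspace_scale[OF sub_Vss[OF j]] by simp
  obtain yj where yj: "yj \<in> Vss j" "y - yj \<in> sum Vss {h. h \<le> d \<and> int h = int j + 1}"
    using eig_up_loc[OF linAs Vss_eig ths_inj Vss_UNIV j z] by blast
  have "sum Vss {h. h \<le> d \<and> int h = int j + 1} \<subseteq> FF (int j + 1)"
    unfolding FF_def Lo_def by (rule sum_sets_mono) (auto intro: subspace_0 sub_Vss)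
  then have "y - yj \<in> FF (int j + 1)" using yj by blast
  moreover have "yj \<in> FF (int j + 1)" unfolding FF_def using yj j by (intro E_Lo[OF sub_Vss]) auto
  ultimately have "(y - yj) + yj \<in> FF (int j + 1)" by (rule subspace_add[OF subFF])
  then show ?thesis unfolding y_def by simp
qed

lemma Bs_FF: assumes x: "x \<in> FF m" shows "Bs x \<in> FF (m + 1)"
proof -
  have "Bs x - scale 0 x \<in> FF (m + 1)"
  proof (rule sum_sets_map[OF fin_Lo subFF linBs _ x[unfolded FF_def Lo_def]])
    fix h y assume h: "h \<in> {h. h \<le> d \<and> int h \<le> m}" and y: "y \<in> Vss h"
    have "Bs y \<in> FF (int h + 1)" using C4 h y by auto
    also have "\<dots> \<subseteq> FF (m + 1)" using h by (intro FF_mono) auto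
    finally show "Bs y - scale 0 y \<in> FF (m + 1)" by simp
  qed
  then show ?thesis by simp
qed


lemma C2: assumes j: "j \<le> d" and v: "v \<in> Vss j"
  shows "B v - scale (b * q powi (2 * int j - int d)) v \<in> FF (int j - 1)"
proof -
  define y where "y = B v"
  define P where "P = q powi (2 * int j - int d)"
  have Pnz: "P \<noteq> 0" unfolding P_def by (rule P_nz)
  define c where "c = (q - inverse q) * ast * b"
  have Asv: "As v = scale (ths (int j)) v" using v Vss_eig[OF j] by (simp add: eigensp_def)
  have e: "scale q (scale (ths (int j)) y) - scale (inverse q) (As y) = scale c v"
    using rel_BAs[of v] unfolding y_def Asv lin_scale[OF linB] c_def .
  have th1: "ths (int j - 1) = q * q * ths (int j)"
    unfolding ths_i pw_dn using q_nz by (simp add: field_simps power2_eq_square)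
  have "As y - scale (ths (int j - 1)) y = scale (- q) (scale q (scale (ths (int j)) y) - scale (inverse q) (As y))"
    unfolding th1 using q_nz by (simp add: scale_right_diff_distrib algebra_simps)
  also have "\<dots> = scale (- q * c) v" unfolding e by simp
  finally have zeq: "As y - scale (ths (int j - 1)) y = scale (- q * c) v" .
  have z: "As y - scale (ths (int j - 1)) y \<in> Vss j"
    unfolding zeq using v by (rule subspace_scale[OF sub_Vss[OF j]])
  obtain yj where yj: "yj \<in> Vss j" "scale (ths (int j) - ths (int j - 1)) yj = scale (- q * c) v"
    "y - yj \<in> sum Vss {h. h \<le> d \<and> int h = int j - 1}"
    using eig_up_loc[OF linAs Vss_eig ths_inj Vss_UNIV j z] unfolding zeq by blast
  have den: "ths (int j) - ths (int j - 1) = ast * (1 - q^2) / P"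
    unfolding th1 unfolding ths_i P_def[symmetric] using Pnz by (simp add: field_simps power2_eq_square)
  have num: "- q * c = ast * b * (1 - q^2)"
    unfolding c_def using q_nz by (simp add: field_simps power2_eq_square)
  have dnz: "ths (int j) - ths (int j - 1) \<noteq> 0" using ths_inj by fastforce
  have "yj = scale ((- q * c) / (ths (int j) - ths (int j - 1))) v"
    by (rule scale_solve[OF dnz yj(2)])
  also have "(- q * c) / (ths (int j) - ths (int j - 1)) = b * P"
    unfolding num den using Pnz ast_nz q2_nz by (simp add: field_simps)
  finally have yjv: "yj = scale (b * P) v" .
  have "sum Vss {h. h \<le> d \<and> int h = int j - 1} \<subseteq> FF (int j - 1)"
    unfolding FF_def Lo_def by (rule sum_sets_mono) (auto intro: subspace_0 sub_Vss)
  then show ?thesis using yj(3) unfolding yjv y_def P_def by blast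
qed

lemma B_FF: assumes x: "x \<in> FF m" shows "B x - scale (b * q powi (2 * m - int d)) x \<in> FF (m - 1)"
proof (rule sum_sets_map[OF fin_Lo subFF linB _ x[unfolded FF_def Lo_def]])
  fix h y assume h: "h \<in> {h. h \<le> d \<and> int h \<le> m}" and y: "y \<in> Vss h"
  have 1: "B y - scale (b * q powi (2 * int h - int d)) y \<in> FF (m - 1)"
    using C2[of h y] h y FF_mono[of "int h - 1" "m - 1"] by auto
  have 2: "scale (b * q powi (2 * int h - int d) - b * q powi (2 * m - int d)) y \<in> FF (m - 1)"
  proof (cases "int h = m")
    case True then show ?thesis using subspace_0[OF subFF] by simp
  next
    case False
    then have "y \<in> FF (m - 1)" unfolding FF_def using h y by (intro E_Lo[OF sub_Vss]) auto
    then show ?thesis by (rule subspace_scale[OF subFF])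
  qed
  have "B y - scale (b * q powi (2 * m - int d)) y =
     (B y - scale (b * q powi (2 * int h - int d)) y) + scale (b * q powi (2 * int h - int d) - b * q powi (2 * m - int d)) y"
    by (simp add: scale_left_diff_distrib)
  also have "\<dots> \<in> FF (m - 1)" by (rule subspace_add[OF subFF 1 2])
  finally show "B y - scale (b * q powi (2 * m - int d)) y \<in> FF (m - 1)" .
qed

lemma C3: assumes j: "j \<le> d" and v: "v \<in> Vs j"
  shows "Bs v - scale (bs * inverse (q powi (2 * int j - int d))) v \<in> GG (int j + 1)"
proof -
  define y where "y = Bs v"
  define P where "P = q powi (2 * int j - int d)"
  have Pnz: "P \<noteq> 0" unfolding P_def by (rule P_nz)
  define c where "c = (q - inverse q) * a * bs"
  have Av: "A v = scale (th (int j)) v" using v Vs_eig[OF j] by (simp add: eigensp_def)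
  have e: "scale q (scale (th (int j)) y) - scale (inverse q) (A y) = scale c v"
    using rel_BsA[of v] unfolding y_def Av lin_scale[OF linBs] c_def .
  have th1: "th (int j + 1) = q * q * th (int j)"
    unfolding th_i pw_up using q_nz by (simp add: field_simps power2_eq_square)
  have "A y - scale (th (int j + 1)) y = scale (- q) (scale q (scale (th (int j)) y) - scale (inverse q) (A y))"
    unfolding th1 using q_nz by (simp add: scale_right_diff_distrib algebra_simps)
  also have "\<dots> = scale (- q * c) v" unfolding e by simp
  finally have zeq: "A y - scale (th (int j + 1)) y = scale (- q * c) v" .
  have z: "A y - scale (th (int j + 1)) y \<in> Vs j"
    unfolding zeq using v by (rule subspace_scale[OF sub_Vs[OF j]])
  obtain yj where yj: "yj \<in> Vs j" "scale (th (int j) - th (int j + 1)) yj = scale (- q * c) v"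
    "y - yj \<in> sum Vs {h. h \<le> d \<and> int h = int j + 1}"
    using eig_up_loc[OF linA Vs_eig th_inj Vs_UNIV j z] unfolding zeq by blast
  have den: "th (int j) - th (int j + 1) = a * P * (1 - q^2)"
    unfolding th1 unfolding th_i P_def[symmetric] by (simp add: field_simps power2_eq_square)
  have num: "- q * c = a * bs * (1 - q^2)"
    unfolding c_def using q_nz by (simp add: field_simps power2_eq_square)
  have dnz: "th (int j) - th (int j + 1) \<noteq> 0" using th_inj by fastforce
  have "yj = scale ((- q * c) / (th (int j) - th (int j + 1))) v"
    by (rule scale_solve[OF dnz yj(2)])
  also have "(- q * c) / (th (int j) - th (int j + 1)) = bs * inverse P"
    unfolding num den using Pnz a_nz q2_nz by (simp add: field_simps)
  finally have yjv: "yj = scale (bs * inverse P) v" .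
  have "sum Vs {h. h \<le> d \<and> int h = int j + 1} \<subseteq> GG (int j + 1)"
    unfolding GG_def Hi_def by (rule sum_sets_mono) (auto intro: subspace_0 sub_Vs)
  then show ?thesis using yj(3) unfolding yjv y_def P_def by blast
qed

lemma Bs_GG: assumes x: "x \<in> GG m" shows "Bs x - scale (bs * inverse (q powi (2 * m - int d))) x \<in> GG (m + 1)"
proof (rule sum_sets_map[OF fin_Hi subGG linBs _ x[unfolded GG_def Hi_def]])
  fix h y assume h: "h \<in> {h. h \<le> d \<and> m \<le> int h}" and y: "y \<in> Vs h"
  have 1: "Bs y - scale (bs * inverse (q powi (2 * int h - int d))) y \<in> GG (m + 1)"
    using C3[of h y] h y GG_mono[of "m + 1" "int h + 1"] by auto
  have 2: "scale (bs * inverse (q powi (2 * int h - int d)) - bs * inverse (q powi (2 * m - int d))) y \<in> GG (m + 1)"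
  proof (cases "int h = m")
    case True then show ?thesis using subspace_0[OF subGG] by simp
  next
    case False
    then have "y \<in> GG (m + 1)" unfolding GG_def using h y by (intro E_Hi[OF sub_Vs]) auto
    then show ?thesis by (rule subspace_scale[OF subGG])
  qed
  have "Bs y - scale (bs * inverse (q powi (2 * m - int d))) y =
     (Bs y - scale (bs * inverse (q powi (2 * int h - int d))) y) + scale (bs * inverse (q powi (2 * int h - int d)) - bs * inverse (q powi (2 * m - int d))) y"
    by (simp add: scale_left_diff_distrib)
  also have "\<dots> \<in> GG (m + 1)" by (rule subspace_add[OF subGG 1 2])
  finally show "Bs y - scale (bs * inverse (q powi (2 * m - int d))) y \<in> GG (m + 1)" .
qed


lemma E1: assumes u: "u \<in> UU m" shows "B u - scale (b * q powi (2 * m - int d)) u \<in> UU (m - 1)"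
proof -
  have f: "u \<in> FF m" and g: "u \<in> GG m" using u unfolding UU_def by auto
  have g1: "u \<in> GG (m - 1)" using g GG_mono[of "m - 1" m] by auto
  have "B u - scale (b * q powi (2 * m - int d)) u \<in> GG (m - 1)"
    by (intro subspace_diff[OF subGG] subspace_scale[OF subGG] B_GG g g1)
  then show ?thesis unfolding UU_def using B_FF[OF f] by auto
qed

lemma E2: assumes u: "u \<in> UU m" shows "Bs u - scale (bs * inverse (q powi (2 * m - int d))) u \<in> UU (m + 1)"
proof -
  have f: "u \<in> FF m" and g: "u \<in> GG m" using u unfolding UU_def by auto
  have f1: "u \<in> FF (m + 1)" using f FF_mono[of m "m + 1"] by auto
  have "Bs u - scale (bs * inverse (q powi (2 * m - int d))) u \<in> FF (m + 1)"
    by (intro subspace_diff[OF subFF] subspace_scale[OF subFF] Bs_FF f f1)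
  then show ?thesis unfolding UU_def using Bs_GG[OF g] by auto
qed

lemma UU_span: "x \<in> sum (\<lambda>i. UU (int i)) {..d}"
  using decU unfolding is_decomposition_def by auto

lemma UU_direct: "(\<forall>i\<le>d. g i \<in> UU (int i)) \<Longrightarrow> sum g {..d} = 0 \<Longrightarrow> \<forall>i\<le>d. g i = 0"
  using decU unfolding is_decomposition_def by blast

lemma K_inj: "inj K"
proof (rule injI)
  fix x y assume e: "K x = K y"
  obtain s where s: "\<forall>i\<in>{..d}. s i \<in> UU (int i)" "x - y = sum s {..d}"
    using UU_span[of "x - y"] unfolding sum_sets_mem[OF finite_atMost] by blast
  have "0 = K (x - y)" using e by (simp add: lin_diff[OF linK])
  also have "\<dots> = (\<Sum>i\<le>d. scale (q powi (2 * int i - int d)) (s i))"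
    unfolding s(2) lin_sum[OF linK] by (rule sum.cong) (use s(1) K_U in auto)
  finally have "\<forall>i\<le>d. scale (q powi (2 * int i - int d)) (s i) = 0"
    using s(1) by (intro UU_direct) (auto intro: subspace_scale[OF subUU])
  then have "\<forall>i\<le>d. s i = 0" using q_nz by simp
  then have "x - y = 0" using s(2) by simp
  then show "x = y" by simp
qed

lemma K_surj: "surj K"
proof -
  have "y \<in> range K" for y
  proof -
    obtain s where s: "\<forall>i\<in>{..d}. s i \<in> UU (int i)" "y = sum s {..d}"
      using UU_span[of y] unfolding sum_sets_mem[OF finite_atMost] by blast
    have "K (\<Sum>i\<le>d. scale (inverse (q powi (2 * int i - int d))) (s i)) = sum s {..d}"
      unfolding lin_sum[OF linK] lin_scale[OF linK]
    proof (rule sum.cong)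
      fix i assume "i \<in> {..d}"
      then have "K (s i) = scale (q powi (2 * int i - int d)) (s i)" using s(1) K_U by auto
      moreover have "q powi (2 * int i - int d) \<noteq> 0" by (rule P_nz)
      ultimately show "scale (inverse (q powi (2 * int i - int d))) (K (s i)) = s i" by simp
    qed simp
    then show ?thesis using s(2) by (metis rangeI)
  qed
  then show ?thesis by auto
qed

lemma Ki_K: "inv K (K x) = x" using K_inj by simp
lemma K_Ki: "K (inv K y) = y" using K_surj by (simp add: surj_f_inv_f)
lemma Ki_add: "additive (inv K)"
  unfolding additive_def
proof (intro allI)
  fix x y
  have "K (inv K x + inv K y) = x + y" by (simp add: lin_add[OF linK] K_Ki)
  then show "inv K (x + y) = inv K x + inv K y" by (metis Ki_K)
qed
lemma Ki_U: assumes u: "u \<in> UU m" shows "inv K u = scale (inverse (q powi (2 * m - int d))) u"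
proof -
  have "K (scale (inverse (q powi (2 * m - int d))) u) = u"
    using P_nz[of "2 * m - int d"] unfolding lin_scale[OF linK] K_U[OF u] by simp
  then show ?thesis by (metis Ki_K)
qed

lemma Id1: "scale (inverse (q - inverse q)) (scale q (inv K (A v)) - scale (inverse q) (A (inv K v))) = scale a v"
proof -
  have "(\<lambda>v. scale (inverse (q - inverse q)) (scale q (inv K (A v)) - scale (inverse q) (A (inv K v)))) v = (\<lambda>v. scale a v) v"
  proof (rule dec_ext[OF decU add_form2[OF Ki_add addA addA Ki_add] add_scale])
    fix i u assume u: "u \<in> UU (int i)"
    define P where "P = q powi (2 * int i - int d)"
    have Pnz: "P \<noteq> 0" unfolding P_def by (rule P_nz)
    define r where "r = A u - scale (th (int i)) u"
    have r: "r \<in> UU (int i + 1)" using U_A[OF u] unfolding r_def .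
    have Au: "A u = scale (a * P) u + r" unfolding r_def th_i P_def by simp
    have Kiu: "inv K u = scale (inverse P) u" using Ki_U[OF u] unfolding P_def .
    have Kir: "inv K r = scale (inverse (P * q^2)) r" using Ki_U[OF r] unfolding pw_up P_def .
    have Kiau: "inv K (scale (a * P) u) = scale (inverse P * (a * P)) u"
      using Ki_U[OF subspace_scale[OF subUU u, of "a * P"]] unfolding P_def by simp
    have X: "inv K (A u) = scale (inverse P * (a * P)) u + scale (inverse (P * q^2)) r"
      unfolding Au additive.add[OF Ki_add] Kiau Kir ..
    have Y: "A (inv K u) = scale (inverse P * (a * P)) u + scale (inverse P) r"
      unfolding Kiu lin_scale[OF linA] Au by (simp add: scale_right_distrib)
    show "scale (inverse (q - inverse q)) (scale q (inv K (A u)) - scale (inverse q) (A (inv K u))) = scale a u"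
      by (rule form2[OF X Y]) (use Pnz q_nz in \<open>simp_all add: field_simps power2_eq_square\<close>)
  qed
  then show ?thesis by simp
qed

lemma Id2: "scale (inverse (q - inverse q)) (scale q (B (inv K v)) - scale (inverse q) (inv K (B v))) = scale b v"
proof -
  have "(\<lambda>v. scale (inverse (q - inverse q)) (scale q (B (inv K v)) - scale (inverse q) (inv K (B v)))) v = (\<lambda>v. scale b v) v"
  proof (rule dec_ext[OF decU add_form2[OF addB Ki_add Ki_add addB] add_scale])
    fix i u assume u: "u \<in> UU (int i)"
    define P where "P = q powi (2 * int i - int d)"
    have Pnz: "P \<noteq> 0" unfolding P_def by (rule P_nz)
    define w where "w = B u - scale (b * P) u"
    have w: "w \<in> UU (int i - 1)" using E1[OF u] unfolding w_def P_def .
    have Bu: "B u = scale (b * P) u + w" unfolding w_def by simp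
    have Kiu: "inv K u = scale (inverse P) u" using Ki_U[OF u] unfolding P_def .
    have Kiw: "inv K w = scale (inverse (P / q^2)) w" using Ki_U[OF w] unfolding pw_dn P_def .
    have Kibu: "inv K (scale (b * P) u) = scale (inverse P * (b * P)) u"
      using Ki_U[OF subspace_scale[OF subUU u, of "b * P"]] unfolding P_def by simp
    have Y: "inv K (B u) = scale (inverse P * (b * P)) u + scale (inverse (P / q^2)) w"
      unfolding Bu additive.add[OF Ki_add] Kibu Kiw ..
    have X: "B (inv K u) = scale (inverse P * (b * P)) u + scale (inverse P) w"
      unfolding Kiu lin_scale[OF linB] Bu by (simp add: scale_right_distrib)
    show "scale (inverse (q - inverse q)) (scale q (B (inv K u)) - scale (inverse q) (inv K (B u))) = scale b u"
      by (rule form2[OF X Y]) (use Pnz q_nz in \<open>simp_all add: field_simps power2_eq_square\<close>)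
  qed
  then show ?thesis by simp
qed

lemma Id3: "scale (inverse (q - inverse q)) (scale q (K (As v)) - scale (inverse q) (As (K v))) = scale ast v"
proof -
  have "(\<lambda>v. scale (inverse (q - inverse q)) (scale q (K (As v)) - scale (inverse q) (As (K v)))) v = (\<lambda>v. scale ast v) v"
  proof (rule dec_ext[OF decU add_form2[OF addK addAs addAs addK] add_scale])
    fix i u assume u: "u \<in> UU (int i)"
    define P where "P = q powi (2 * int i - int d)"
    have Pnz: "P \<noteq> 0" unfolding P_def by (rule P_nz)
    define l where "l = As u - scale (ths (int i)) u"
    have l: "l \<in> UU (int i - 1)" using U_As[OF u] unfolding l_def .
    have Asu: "As u = scale (ast * inverse P) u + l" unfolding l_def ths_i P_def by simp
    have Ku: "K u = scale P u" using K_U[OF u] unfolding P_def .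
    have Kl: "K l = scale (P / q^2) l" using K_U[OF l] unfolding pw_dn P_def .
    have X: "K (As u) = scale (ast * inverse P * P) u + scale (P / q^2) l"
      unfolding Asu lin_add[OF linK] lin_scale[OF linK] Ku Kl by simp
    have Y: "As (K u) = scale (P * (ast * inverse P)) u + scale P l"
      unfolding Ku lin_scale[OF linAs] Asu by (simp add: scale_right_distrib)
    show "scale (inverse (q - inverse q)) (scale q (K (As u)) - scale (inverse q) (As (K u))) = scale ast u"
      by (rule form2[OF X Y]) (use Pnz q_nz in \<open>simp_all add: field_simps power2_eq_square\<close>)
  qed
  then show ?thesis by simp
qed

lemma Id4: "scale (inverse (q - inverse q)) (scale q (Bs (K v)) - scale (inverse q) (K (Bs v))) = scale bs v"
proof -
  have "(\<lambda>v. scale (inverse (q - inverse q)) (scale q (Bs (K v)) - scale (inverse q) (K (Bs v)))) v = (\<lambda>v. scale bs v) v"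
  proof (rule dec_ext[OF decU add_form2[OF addBs addK addK addBs] add_scale])
    fix i u assume u: "u \<in> UU (int i)"
    define P where "P = q powi (2 * int i - int d)"
    have Pnz: "P \<noteq> 0" unfolding P_def by (rule P_nz)
    define w where "w = Bs u - scale (bs * inverse P) u"
    have w: "w \<in> UU (int i + 1)" using E2[OF u] unfolding w_def P_def .
    have Bsu: "Bs u = scale (bs * inverse P) u + w" unfolding w_def by simp
    have Ku: "K u = scale P u" using K_U[OF u] unfolding P_def .
    have Kw: "K w = scale (P * q^2) w" using K_U[OF w] unfolding pw_up P_def .
    have Y: "K (Bs u) = scale (bs * inverse P * P) u + scale (P * q^2) w"
      unfolding Bsu lin_add[OF linK] lin_scale[OF linK] Ku Kw by simp
    have X: "Bs (K u) = scale (P * (bs * inverse P)) u + scale P w"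
      unfolding Ku lin_scale[OF linBs] Bsu by (simp add: scale_right_distrib)
    show "scale (inverse (q - inverse q)) (scale q (Bs (K u)) - scale (inverse q) (K (Bs u))) = scale bs u"
      by (rule form2[OF X Y]) (use Pnz q_nz in \<open>simp_all add: field_simps power2_eq_square\<close>)
  qed
  then show ?thesis by simp
qed

end


theorem theorem10p1:
  fixes scale :: "'k::alg_closed_field \<Rightarrow> 'v::ab_group_add \<Rightarrow> 'v"
    and A As B Bs K :: "'v \<Rightarrow> 'v"
    and Vs Vss :: "nat \<Rightarrow> 'v set"
    and d :: nat and q a ast b bs :: 'k
  assumes vs: "vector_space scale"
    and findim: "\<exists>S. finite S \<and> module.span scale S = UNIV"
    and nonzero: "(UNIV :: 'v set) \<noteq> {0}"
    and q_nz: "q \<noteq> 0"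
    and q_nonroot: "\<forall>n::nat. n > 0 \<longrightarrow> q ^ n \<noteq> 1"
    and tdp: "tridiagonal_pair scale A As"
    and std: "standard_ordering scale A As Vs d"
    and stds: "standard_ordering scale As A Vss d"
    and eigA: "\<forall>i\<le>d. Vs i = eigensp scale A (a * q powi (2 * int i - int d))"
    and eigAs: "\<forall>i\<le>d. Vss i = eigensp scale As (ast * q powi (int d - 2 * int i))"
    and a_nz: "a \<noteq> 0" and ast_nz: "ast \<noteq> 0" and b_nz: "b \<noteq> 0" and bs_nz: "bs \<noteq> 0"
    and dec1: "is_decomposition scale
                 (\<lambda>i. (\<Sum>h\<le>i. Vss h) \<inter> (\<Sum>h\<le>d - i. Vs h)) d"
    and dec2: "is_decomposition scale
                 (\<lambda>i. (\<Sum>h\<in>{d - i..d}. Vss h) \<inter> (\<Sum>h\<in>{i..d}. Vs h)) d"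
    and dec3: "is_decomposition scale
                 (\<lambda>i. (\<Sum>h\<le>i. Vss h) \<inter> (\<Sum>h\<in>{i..d}. Vs h)) d"
    and B_lin: "Vector_Spaces.linear scale scale B"
    and B_def: "\<forall>i\<le>d. \<forall>v \<in> (\<Sum>h\<le>i. Vss h) \<inter> (\<Sum>h\<le>d - i. Vs h).
                   B v = scale (b * q powi (2 * int i - int d)) v"
    and Bs_lin: "Vector_Spaces.linear scale scale Bs"
    and Bs_def: "\<forall>i\<le>d. \<forall>v \<in> (\<Sum>h\<in>{d - i..d}. Vss h) \<inter> (\<Sum>h\<in>{i..d}. Vs h).
                   Bs v = scale (bs * q powi (int d - 2 * int i)) v"
    and K_lin: "Vector_Spaces.linear scale scale K"
    and K_def: "\<forall>i\<le>d. \<forall>v \<in> (\<Sum>h\<le>i. Vss h) \<inter> (\<Sum>h\<in>{i..d}. Vs h).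
                   K v = scale (q powi (2 * int i - int d)) v"
  shows "(\<lambda>v. scale (inverse (q - inverse q))
            (scale q (inv K (A v)) - scale (inverse q) (A (inv K v)))) = (\<lambda>v. scale a v) \<and>
    (\<lambda>v. scale (inverse (q - inverse q))
            (scale q (B (inv K v)) - scale (inverse q) (inv K (B v)))) = (\<lambda>v. scale b v) \<and>
    (\<lambda>v. scale (inverse (q - inverse q))
            (scale q (K (As v)) - scale (inverse q) (As (K v)))) = (\<lambda>v. scale ast v) \<and>
    (\<lambda>v. scale (inverse (q - inverse q))
            (scale q (Bs (K v)) - scale (inverse q) (K (Bs v)))) = (\<lambda>v. scale bs v)"
proof -
  interpret vector_space scale by (rule vs)
  have linA: "Vector_Spaces.linear scale scale A" and linAs: "Vector_Spaces.linear scale scale As"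
    using tdp unfolding tridiagonal_pair_def by auto
  have eqA: "Vs ` {..d} = {W. is_eigenspace scale A W}"
    using std unfolding standard_ordering_def by blast
  have eqAs: "Vss ` {..d} = {W. is_eigenspace scale As W}"
    using stds unfolding standard_ordering_def by blast
  have spanVs: "span (\<Union>h\<le>d. Vs h) = UNIV"
    using tdp unfolding tridiagonal_pair_def diagonalizable_def eqA[symmetric] by blast
  have spanVss: "span (\<Union>h\<le>d. Vss h) = UNIV"
    using tdp unfolding tridiagonal_pair_def diagonalizable_def eqAs[symmetric] by blast
  have triA: "\<forall>i\<le>d. A ` Vss i \<subseteq>
        ext_sp Vss d (int i - 1) + ext_sp Vss d (int i) + ext_sp Vss d (int i + 1)"
    using stds unfolding standard_ordering_def by blast
  have triAs: "\<forall>i\<le>d. As ` Vs i \<subseteq>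
        ext_sp Vs d (int i - 1) + ext_sp Vs d (int i) + ext_sp Vs d (int i + 1)"
    using std unfolding standard_ordering_def by blast
  interpret T: tds scale A As B Bs K Vs Vss d q a ast b bs
    by (rule tds.intro[OF vs tds_axioms.intro[OF q_nz q_nonroot a_nz ast_nz linA linAs B_lin Bs_lin
          K_lin spanVs spanVss triA triAs eigA eigAs dec1 dec2 dec3 B_def Bs_def K_def]])
  show ?thesis using T.Id1 T.Id2 T.Id3 T.Id4 by (intro conjI ext) auto
qed

end
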